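(* Let $G=(V,E)$ be a finite, simple, undirected, connected graph with no isolated vertices, and suppose $G$ has at least one split independent set. Then every maximal split independent set $S$ of $G$ is a minimal split dominating set of $G$.
   Context: For $X\subseteq V$, $\langle X\rangle$ denotes the induced subgraph on $X$. A set $D\subseteq V$ is dominating if every vertex of $V\setminus D$ has a neighbor in $D$. A dominating set $S$ is a split dominating set if $\langle V\setminus S\rangle$ is disconnected or a $K_1$. A split dominating set $S$ is a minimal split dominating set if for every $u\in S$ the set $S\setminus\{u\}$ is not a split dominating set (i.e. either $S\setminus\{u\}$ is not dominating, or $\langle (V\setminus S)\cup\{u\}\rangle$ is connected). A set $S$ is a split independent set if $S$ is independent and $\langle V\setminus S\rangle$ is disconnected or a $K_1$. A split independent set $S$ is a maximal split independent set if for every $v\in V\setminus S$, either $S\cup\{v\}$ is not independent, or $\langle V\setminus (S\cup\{v\})\rangle$ is connected. *)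

theory Defs
  imports Main
begin

definition simple_graph :: "'a set \<Rightarrow> ('a \<Rightarrow> 'a \<Rightarrow> bool) \<Rightarrow> bool" where
  "simple_graph V E \<longleftrightarrow> finite V \<and> (\<forall>a b. E a b \<longrightarrow> a \<in> V \<and> b \<in> V)
     \<and> (\<forall>a b. E a b \<longrightarrow> E b a) \<and> (\<forall>a. \<not> E a a)"

definition induced_edge :: "('a \<Rightarrow> 'a \<Rightarrow> bool) \<Rightarrow> 'a set \<Rightarrow> 'a \<Rightarrow> 'a \<Rightarrow> bool" where
  "induced_edge E X a b \<longleftrightarrow> a \<in> X \<and> b \<in> X \<and> E a b"

definition connected_on :: "('a \<Rightarrow> 'a \<Rightarrow> bool) \<Rightarrow> 'a set \<Rightarrow> bool" where
  "connected_on E X \<longleftrightarrow> X \<noteq> {} \<and> (\<forall>x\<in>X. \<forall>y\<in>X. (induced_edge E X)\<^sup>*\<^sup>* x y)"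

definition disconnected_on :: "('a \<Rightarrow> 'a \<Rightarrow> bool) \<Rightarrow> 'a set \<Rightarrow> bool" where
  "disconnected_on E X \<longleftrightarrow> (\<exists>x\<in>X. \<exists>y\<in>X. \<not> (induced_edge E X)\<^sup>*\<^sup>* x y)"

definition no_isolated :: "'a set \<Rightarrow> ('a \<Rightarrow> 'a \<Rightarrow> bool) \<Rightarrow> bool" where
  "no_isolated V E \<longleftrightarrow> (\<forall>v\<in>V. \<exists>u\<in>V. E v u)"

definition dominating :: "'a set \<Rightarrow> ('a \<Rightarrow> 'a \<Rightarrow> bool) \<Rightarrow> 'a set \<Rightarrow> bool" where
  "dominating V E D \<longleftrightarrow> D \<subseteq> V \<and> (\<forall>v\<in>V - D. \<exists>d\<in>D. E v d)"

definition split_cond :: "'a set \<Rightarrow> ('a \<Rightarrow> 'a \<Rightarrow> bool) \<Rightarrow> 'a set \<Rightarrow> bool" where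
  "split_cond V E S \<longleftrightarrow> disconnected_on E (V - S) \<or> card (V - S) = 1"

definition split_dominating :: "'a set \<Rightarrow> ('a \<Rightarrow> 'a \<Rightarrow> bool) \<Rightarrow> 'a set \<Rightarrow> bool" where
  "split_dominating V E S \<longleftrightarrow> dominating V E S \<and> split_cond V E S"

definition minimal_split_dominating :: "'a set \<Rightarrow> ('a \<Rightarrow> 'a \<Rightarrow> bool) \<Rightarrow> 'a set \<Rightarrow> bool" where
  "minimal_split_dominating V E S \<longleftrightarrow> split_dominating V E S
     \<and> (\<forall>u\<in>S. \<not> split_dominating V E (S - {u}))"

definition independent :: "'a set \<Rightarrow> ('a \<Rightarrow> 'a \<Rightarrow> bool) \<Rightarrow> 'a set \<Rightarrow> bool" where
  "independent V E S \<longleftrightarrow> S \<subseteq> V \<and> (\<forall>a\<in>S. \<forall>b\<in>S. \<not> E a b)"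

definition split_independent :: "'a set \<Rightarrow> ('a \<Rightarrow> 'a \<Rightarrow> bool) \<Rightarrow> 'a set \<Rightarrow> bool" where
  "split_independent V E S \<longleftrightarrow> independent V E S \<and> split_cond V E S"

definition maximal_split_independent :: "'a set \<Rightarrow> ('a \<Rightarrow> 'a \<Rightarrow> bool) \<Rightarrow> 'a set \<Rightarrow> bool" where
  "maximal_split_independent V E S \<longleftrightarrow> split_independent V E S
     \<and> (\<forall>v\<in>V - S. \<not> independent V E (S \<union> {v}) \<or> connected_on E (V - (S \<union> {v})))"

end

theory Submission
  imports Defs
begin

lemma sym_rtc:
  assumes "\<And>a b. R a b \<Longrightarrow> R b a" and "R\<^sup>*\<^sup>* x y"
  shows "R\<^sup>*\<^sup>* y x"
  using assms(2)
proof (induction rule: rtranclp_induct)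
  case base then show ?case by simp
next
  case (step y z)
  then show ?case using assms(1) by (meson converse_rtranclp_into_rtranclp)
qed

lemma ie_mono: "A \<subseteq> B \<Longrightarrow> (induced_edge E A)\<^sup>*\<^sup>* x y \<Longrightarrow> (induced_edge E B)\<^sup>*\<^sup>* x y"
  by (rule rtranclp_mono[THEN predicate2D]) (auto simp: induced_edge_def)

theorem mainTheorem2:
  fixes V :: "'a set" and E :: "'a \<Rightarrow> 'a \<Rightarrow> bool"
  assumes "simple_graph V E"
    and "connected_on E V"
    and "no_isolated V E"
    and "\<exists>S. split_independent V E S"
  shows "\<forall>S. maximal_split_independent V E S \<longrightarrow> minimal_split_dominating V E S"
proof (intro allI impI)
  fix S assume M: "maximal_split_independent V E S"
  have ind: "independent V E S" and sc: "split_cond V E S"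
    and mx: "\<forall>v\<in>V - S. \<not> independent V E (S \<union> {v}) \<or> connected_on E (V - (S \<union> {v}))"
    using M by (auto simp: maximal_split_independent_def split_independent_def)
  have G: "finite V" "\<And>a b. E a b \<Longrightarrow> a \<in> V \<and> b \<in> V" "\<And>a b. E a b \<Longrightarrow> E b a" "\<And>a. \<not> E a a"
    using assms(1) unfolding simple_graph_def by blast+
  have SV: "S \<subseteq> V" and SI: "\<And>a b. a \<in> S \<Longrightarrow> b \<in> S \<Longrightarrow> \<not> E a b"
    using ind by (auto simp: independent_def)
  have dom: "dominating V E S"
    unfolding dominating_def
  proof (intro conjI SV ballI)
    fix v assume v: "v \<in> V - S"
    show "\<exists>d\<in>S. E v d"
    proof (rule ccontr)
      assume nd: "\<not> (\<exists>d\<in>S. E v d)"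
      have "independent V E (S \<union> {v})"
        using SV SI nd v G(3,4) unfolding independent_def by blast
      with mx v have C: "connected_on E (V - (S \<union> {v}))" by blast
      let ?W = "V - (S \<union> {v})"
      obtain w where w: "w \<in> V" "E v w" using assms(3) v unfolding no_isolated_def by blast
      have wW: "w \<in> ?W" using w nd G(4) by auto
      let ?R = "induced_edge E (V - S)"
      have Rs: "\<And>a b. ?R a b \<Longrightarrow> ?R b a" using G(3) by (auto simp: induced_edge_def)
      have toW: "?R\<^sup>*\<^sup>* x w" if "x \<in> V - S" for x
      proof (cases "x = v")
        case True
        then show ?thesis using w wW v by (auto simp: induced_edge_def)
      next
        case False
        then have "x \<in> ?W" using that by auto
        then have "(induced_edge E ?W)\<^sup>*\<^sup>* x w" using C wW unfolding connected_on_def by blast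
        then show ?thesis by (rule ie_mono[rotated]) auto
      qed
      have all: "?R\<^sup>*\<^sup>* x y" if "x \<in> V - S" "y \<in> V - S" for x y
        using toW[OF that(1)] sym_rtc[OF Rs toW[OF that(2)]] by (meson rtranclp_trans)
      from sc show False
      proof (unfold split_cond_def, elim disjE)
        assume "disconnected_on E (V - S)"
        then show False using all unfolding disconnected_on_def by blast
      next
        assume "card (V - S) = 1"
        then have "V - S = {v}" using v by (metis card_1_singletonE singletonD)
        then have "?W = {}" by auto
        then show False using C unfolding connected_on_def by blast
      qed
    qed
  qed
  have "\<not> split_dominating V E (S - {u})" if u: "u \<in> S" for u
  proof
    assume "split_dominating V E (S - {u})"
    then have "dominating V E (S - {u})" by (simp add: split_dominating_def)
    moreover have "u \<in> V - (S - {u})" using u SV by auto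
    ultimately obtain d where "d \<in> S - {u}" "E u d" unfolding dominating_def by blast
    then show False using SI u by blast
  qed
  then show "minimal_split_dominating V E S"
    using dom sc by (auto simp: minimal_split_dominating_def split_dominating_def)
qed

end
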